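(* Let $\alpha\in\mathbb{Q}(i)\setminus\mathbb{R}$ with $|\alpha|>1$, with minimal primitive polynomial $P_\alpha(X)=a_2X^2+a_1X+a_0$ ($a_0,a_1,a_2\in\mathbb{Z}$ coprime, $a_2>0$, $P_\alpha(\alpha)=0$), $\mathcal{D}=\{0,\ldots,|a_0|-1\}$ and $\Lambda_\alpha=\mathbb{Z}[\alpha]\cap\alpha^{-1}\mathbb{Z}[\alpha^{-1}]$. For $N\in\Lambda_\alpha$ let $D(N)=\{d\in\mathcal{D}: \alpha N+d\in\Lambda_\alpha\}$. Then for every $N\in\Lambda_\alpha$ there exists $r\in\mathbb{Z}$ such that $D(N)=\mathcal{D}\cap(a_2\mathbb{Z}+r)$. *)

theory Defs
  imports "HOL-Complex_Analysis.Complex_Analysis" "HOL-Computational_Algebra.Polynomial"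
begin

definition int_poly_ring :: "complex \<Rightarrow> complex set" where
  "int_poly_ring a = {poly (map_poly of_int p) a | p :: int poly. True}"

definition Lambda_set :: "complex \<Rightarrow> complex set" where
  "Lambda_set a = int_poly_ring a \<inter> {inverse a * z | z. z \<in> int_poly_ring (inverse a)}"

definition digit_set :: "int \<Rightarrow> int set" where
  "digit_set a0 = {d. 0 \<le> d \<and> d \<le> \<bar>a0\<bar> - 1}"

definition admissible_digits :: "complex \<Rightarrow> int \<Rightarrow> complex \<Rightarrow> int set" where
  "admissible_digits a a0 N = {d \<in> digit_set a0. a * N + of_int d \<in> Lambda_set a}"

end

theory Submission imports Defs "HOL-Computational_Algebra.Polynomial_Factorial" begin

abbreviation ip :: "int poly \<Rightarrow> complex \<Rightarrow> complex" where
  "ip p x \<equiv> poly (map_poly of_int p) x"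

lemma ip_add: "ip (p+q) x = ip p x + ip q x"
proof -
  have "map_poly (of_int :: int \<Rightarrow> complex) (p+q) = map_poly of_int p + map_poly of_int q"
    by (intro poly_eqI) (simp add: coeff_map_poly)
  then show ?thesis by simp
qed
lemma ip_smult: "ip (smult c p) x = of_int c * ip p x"
proof -
  have "map_poly (of_int :: int \<Rightarrow> complex) (smult c p) = smult (of_int c) (map_poly of_int p)"
    by (intro poly_eqI) (simp add: coeff_map_poly)
  then show ?thesis by simp
qed
lemma ip_pCons: "ip (pCons c p) x = of_int c + x * ip p x"
  by (simp add: map_poly_pCons)
lemma ip_diff: "ip (p-q) x = ip p x - ip q x"
proof -
  have "map_poly (of_int :: int \<Rightarrow> complex) (p-q) = map_poly of_int p - map_poly of_int q"
    by (intro poly_eqI) (simp add: coeff_map_poly)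
  then show ?thesis by simp
qed
lemma ip_uminus: "ip (-q) x = - ip q x"
  using ip_diff[of 0 q x] by simp
lemma ip_mult: "ip (p*q) x = ip p x * ip q x"
proof (induction p)
  case (pCons a p)
  show ?case by (simp add: ip_add ip_smult ip_pCons pCons(2) algebra_simps)
qed simp

lemma lin_zero:
  fixes c d :: int and b :: complex
  assumes "b \<notin> \<real>" "of_int c + b * of_int d = 0"
  shows "c = 0 \<and> d = 0"
proof -
  have "d = 0"
  proof (rule ccontr)
    assume "d \<noteq> 0"
    then have "b = - of_int c / of_int d" using assms(2) by (simp add: field_simps add_eq_0_iff)
    then have "b \<in> \<real>" by simp
    with assms(1) show False by simp
  qed
  with assms show ?thesis by simp
qed

lemma min_dvd:
  fixes f g :: "int poly"
  assumes "content f = 1" "degree f = 2" "ip f b = 0" "ip g b = 0" "b \<notin> \<real>"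
  shows "f dvd g"
proof -
  have f0: "f \<noteq> 0" using assms(2) by auto
  obtain h r where hr: "pseudo_divmod g f = (h, r)" by (metis surj_pair)
  note pd = pseudo_divmod[OF f0 hr]
  define k where "k = coeff f (degree f) ^ (Suc (degree g) - degree f)"
  have kne: "k \<noteq> 0" unfolding k_def using f0 by simp
  have eq: "smult k g = f * h + r" using pd(1) unfolding k_def .
  have dr: "degree r \<le> 1" using pd(2) assms(2) by auto
  have "ip (smult k g) b = ip (f*h + r) b" using eq by simp
  then have "ip r b = 0" using assms by (simp add: ip_smult ip_add ip_mult)
  moreover have "r = pCons (coeff r 0) [:coeff r 1:]"
    using dr by (intro poly_eqI) (auto simp: coeff_pCons coeff_eq_0 split: nat.splits)
  ultimately have "ip (pCons (coeff r 0) [:coeff r 1:]) b = 0" by simp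
  then have "of_int (coeff r 0) + b * of_int (coeff r 1) = 0" by (simp add: ip_pCons)
  from lin_zero[OF assms(5) this] have "r = 0"
    using \<open>r = pCons (coeff r 0) [:coeff r 1:]\<close> by simp
  with eq have "smult k g = f * h" by simp
  then have "f dvd smult k g" by simp
  then have "fract_poly f dvd smult (to_fract k) (fract_poly g)"
    by (metis fract_poly_dvd fract_poly_smult)
  then have "fract_poly f dvd fract_poly g"
    using kne by (metis dvd_smult_cancel to_fract_eq_0_iff)
  then show ?thesis using assms(1) by (rule fract_poly_dvdD)
qed


lemma t1: fixes b :: complex shows "ip [:a2,a1,a0:] b = of_int a2 + of_int a1 * b + of_int a0 * b^2"
  by (simp add: ip_pCons power2_eq_square algebra_simps)
lemma t2: fixes b :: complex assumes "of_int a2 + of_int a1 * b + of_int a0 * b^2 = 0"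
  shows "of_int a2 = - (of_int a1 * b + of_int a0 * b^2)"
proof -
  have "of_int a2 = (of_int a2 + of_int a1 * b + of_int a0 * b^2) - (of_int a1 * b + of_int a0 * b^2)"
    by (simp add: algebra_simps)
  then show ?thesis using assms by simp
qed
lemma t3: fixes b :: complex assumes a2e: "of_int a2 = - (of_int a1 * b + of_int a0 * b^2)"
  shows "of_int (a2 * k) = b * ip [:-a1*k, -a0*k:] b"
  by (simp add: ip_pCons a2e algebra_simps power2_eq_square)
lemma t4: "g = [:a2,a1,a0:] * h \<Longrightarrow> coeff g 0 = a2 * coeff (h::int poly) 0"
  by (simp add: coeff_mult_0)
lemma key:
  fixes a0 a1 a2 n :: int and b :: complex
  assumes "content [:a2,a1,a0:] = 1" "a0 \<noteq> 0" "b \<notin> \<real>"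
    and eqb: "of_int a2 + of_int a1 * b + of_int a0 * b^2 = 0"
  shows "(\<exists>z\<in>int_poly_ring b. of_int n = b * z) \<longleftrightarrow> a2 dvd n"
proof
  assume "\<exists>z\<in>int_poly_ring b. of_int n = b * z"
  then obtain q where q: "of_int n = b * ip q b" unfolding int_poly_ring_def by auto
  define g where "g = pCons n (smult (-1) q)"
  have "ip g b = 0" unfolding g_def using q by (simp add: ip_pCons ip_uminus)
  moreover have "ip [:a2,a1,a0:] b = 0" using eqb t1 by simp
  moreover have "degree [:a2,a1,a0:] = 2" using assms(2) by simp
  ultimately have "[:a2,a1,a0:] dvd g" using min_dvd assms(1,3) by blast
  then obtain h where "g = [:a2,a1,a0:] * h" by (rule dvdE)
  then have "coeff g 0 = a2 * coeff h 0" by (rule t4)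
  then show "a2 dvd n" unfolding g_def by simp
next
  assume "a2 dvd n"
  then obtain k where k: "n = a2 * k" by (rule dvdE)
  have "of_int n = b * ip [:-a1*k, -a0*k:] b"
    unfolding k by (rule t3[OF t2[OF eqb]])
  then show "\<exists>z\<in>int_poly_ring b. of_int n = b * z" unfolding int_poly_ring_def by blast
qed


theorem mainTheorem6:
  fixes \<alpha> :: complex and a0 a1 a2 :: int
  assumes "Re \<alpha> \<in> \<rat>" and "Im \<alpha> \<in> \<rat>" and "\<alpha> \<notin> \<real>"
    and "cmod \<alpha> > 1"
    and "gcd a0 (gcd a1 a2) = 1" and "a2 > 0"
    and "of_int a2 * \<alpha>\<^sup>2 + of_int a1 * \<alpha> + of_int a0 = 0"
  shows "\<forall>N \<in> Lambda_set \<alpha>. \<exists>r :: int.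
           admissible_digits \<alpha> a0 N = digit_set a0 \<inter> {a2 * k + r | k :: int. True}"
proof
  fix N assume N: "N \<in> Lambda_set \<alpha>"
  define b where "b = inverse \<alpha>"
  have a0: "\<alpha> \<noteq> 0" using assms(3) by auto
  have bnr: "b \<notin> \<real>" unfolding b_def using assms(3)
    by (metis Reals_inverse inverse_inverse_eq)
  have a00: "a0 \<noteq> 0"
  proof
    assume "a0 = 0"
    then have "\<alpha> * (of_int a2 * \<alpha> + of_int a1) = 0" using assms(7)
      by (simp add: algebra_simps power2_eq_square)
    then have "of_int a2 * \<alpha> + of_int a1 = 0" using a0 by simp
    then have "\<alpha> * of_int a2 = - of_int a1" by (simp add: algebra_simps eq_neg_iff_add_eq_0)
    moreover have "of_int a2 \<noteq> (0::complex)" using assms(6) by simp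
    ultimately have "\<alpha> = - of_int a1 / of_int a2"
      by (simp add: field_simps)
    then have "\<alpha> \<in> \<real>" by simp
    with assms(3) show False by simp
  qed
  have eqb: "of_int a2 + of_int a1 * b + of_int a0 * b^2 = 0"
  proof -
    have "b^2 * (of_int a2 * \<alpha>\<^sup>2 + of_int a1 * \<alpha> + of_int a0) = 0" using assms(7) by simp
    then show ?thesis unfolding b_def using a0
      by (simp add: field_simps power2_eq_square)
  qed
  have cont: "content [:a2,a1,a0:] = 1"
  proof -
    have "content [:a2,a1,a0:] dvd a2" using content_dvd_coeff[of "[:a2,a1,a0:]" 0] by simp
    moreover have "content [:a2,a1,a0:] dvd a1" using content_dvd_coeff[of "[:a2,a1,a0:]" 1] by simp
    moreover have "content [:a2,a1,a0:] dvd a0" using content_dvd_coeff[of "[:a2,a1,a0:]" "Suc (Suc 0)"] by simp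
    ultimately have "content [:a2,a1,a0:] dvd 1" using assms(5) by (metis gcd_greatest)
    then have "normalize (content [:a2,a1,a0:]) = 1" by (rule is_unit_normalize)
    then show ?thesis by (simp only: normalize_content)
  qed
  note K = key[OF cont a00 bnr eqb]
  from N obtain p q where p: "N = ip p \<alpha>" and q: "N = b * ip q b"
    unfolding Lambda_set_def int_poly_ring_def b_def by blast
  obtain c q' where cq: "q = pCons c q'" by (cases q)
  have aN: "\<alpha> * N = of_int c + b * ip q' b"
    using q cq a0 unfolding b_def by (simp add: ip_pCons)
  have iff: "\<alpha> * N + of_int d \<in> Lambda_set \<alpha> \<longleftrightarrow> a2 dvd (c + d)" for d
  proof
    assume "\<alpha> * N + of_int d \<in> Lambda_set \<alpha>"
    then obtain s where s: "\<alpha> * N + of_int d = b * ip s b"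
      unfolding Lambda_set_def int_poly_ring_def b_def by blast
    have "of_int (c + d) = b * ip (s - q') b"
      using s aN by (simp add: ip_diff algebra_simps)
    then show "a2 dvd (c + d)" using K unfolding int_poly_ring_def by blast
  next
    assume "a2 dvd (c + d)"
    then obtain z where "z \<in> int_poly_ring b" "of_int (c + d) = b * z" using K by blast
    then obtain t where t: "of_int (c + d) = b * ip t b" unfolding int_poly_ring_def by blast
    have "\<alpha> * N + of_int d = b * ip (t + q') b"
      using t aN by (simp add: ip_add algebra_simps)
    moreover have "\<alpha> * N + of_int d = ip (pCons d p) \<alpha>"
      using p by (simp add: ip_pCons)
    ultimately show "\<alpha> * N + of_int d \<in> Lambda_set \<alpha>"
      unfolding Lambda_set_def int_poly_ring_def b_def by blast
  qed
  show "\<exists>r :: int. admissible_digits \<alpha> a0 N = digit_set a0 \<inter> {a2 * k + r | k :: int. True}"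
  proof (intro exI set_eqI)
    fix d
    have "a2 dvd (c + d) \<longleftrightarrow> (\<exists>k. d = a2 * k + - c)"
      by (metis add.commute diff_add_cancel dvd_def minus_add_cancel add_diff_cancel_left' 
          uminus_add_conv_diff diff_minus_eq_add)
    then show "d \<in> admissible_digits \<alpha> a0 N \<longleftrightarrow> d \<in> digit_set a0 \<inter> {a2 * k + - c | k :: int. True}"
      unfolding admissible_digits_def using iff by auto
  qed
qed

end
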